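(* Let $E$ be the group with presentation $\langle t,u,v\mid t^2=1,\ u^2=v^2,\ tut^{-1}=u^{-1},\ tv=vt,\ uv=vu\rangle$, and let $\{T,U,V\}$ be the basis of $H^1(E;\mathbb{F}_2)$ dual to the images of $t,u,v$ in $H_1(E;\mathbb{F}_2)$. Then $TU+U^2+V^2=0$ in $H^2(E;\mathbb{F}_2)$.
   Context: Products are cup products. *)

theory Defs
  imports "HOL-Algebra.Group" "HOL-Library.Numeral_Type"
begin

datatype gen = Gt | Gu | Gv

type_synonym letter = "gen \<times> bool"  \<comment> \<open>(x, False) is x, (x, True) is x inverse\<close>
type_synonym word = "letter list"

definition relators :: "word set" where
  "relators =
     {[(Gt,False),(Gt,False)],                          \<comment> \<open>t^2\<close>
      [(Gu,False),(Gu,False),(Gv,True),(Gv,True)],      \<comment> \<open>u^2 v^-2\<close>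
      [(Gt,False),(Gu,False),(Gt,True),(Gu,False)],     \<comment> \<open>t u t^-1 u\<close>
      [(Gt,False),(Gv,False),(Gt,True),(Gv,True)],      \<comment> \<open>t v t^-1 v^-1\<close>
      [(Gu,False),(Gv,False),(Gu,True),(Gv,True)]}      \<comment> \<open>u v u^-1 v^-1\<close>"

inductive eqv :: "word \<Rightarrow> word \<Rightarrow> bool" where
  eqv_refl: "eqv w w"
| eqv_sym: "eqv w w' \<Longrightarrow> eqv w' w"
| eqv_trans: "eqv w1 w2 \<Longrightarrow> eqv w2 w3 \<Longrightarrow> eqv w1 w3"
| eqv_cancel: "eqv (a @ [(x, b), (x, \<not> b)] @ c) (a @ c)"
| eqv_rel: "r \<in> relators \<Longrightarrow> eqv (a @ r @ c) (a @ c)"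

definition E_rel :: "(word \<times> word) set" where
  "E_rel = {(x, y). eqv x y}"

definition cls :: "word \<Rightarrow> word set" where
  "cls w = E_rel `` {w}"

definition E :: "word set monoid" where
  "E = \<lparr> carrier = UNIV // E_rel,
         mult = (\<lambda>X Y. cls ((SOME x. x \<in> X) @ (SOME y. y \<in> Y))),
         one = cls [] \<rparr>"

text \<open>Elements of H^1(E;F_2) = Hom(E, F_2); F_2 is the type 2.\<close>
definition is_hom_F2 :: "(word set \<Rightarrow> 2) \<Rightarrow> bool" where
  "is_hom_F2 f \<longleftrightarrow> (\<forall>g\<in>carrier E. \<forall>h\<in>carrier E. f (g \<otimes>\<^bsub>E\<^esub> h) = f g + f h)"

definition cup1 :: "(word set \<Rightarrow> 2) \<Rightarrow> (word set \<Rightarrow> 2) \<Rightarrow> word set \<Rightarrow> word set \<Rightarrow> 2" where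
  "cup1 a b g h = a g * b h"

definition cobound1 :: "(word set \<Rightarrow> 2) \<Rightarrow> word set \<Rightarrow> word set \<Rightarrow> 2" where
  "cobound1 f g h = f h - f (g \<otimes>\<^bsub>E\<^esub> h) + f g"

end

theory Submission
  imports Defs
begin

lemma two_add_self: "(a::2) + a = 0"
proof -
  have "(2::2) = of_nat CHAR(2)" by simp
  also have "\<dots> = 0" by (rule of_nat_CHAR)
  finally have "(2::2) = 0" .
  then show ?thesis by (metis mult_2 mult_zero_left)
qed

lemma times2: "(a::2) * 2 = 0" by (metis mult_2_right two_add_self)

lemma neg2: "- (a::2) = a"
  by (metis add_eq_0_iff two_add_self)

lemma key2: "(z::2) = y - (x + y + z) + x"
proof -
  have "y - (x + y + z) + x = - z" by (simp add: algebra_simps)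
  then show ?thesis by (simp add: neg2)
qed

lemma eqv_app_l: "eqv x x' \<Longrightarrow> eqv (y @ x) (y @ x')"
proof (induction rule: eqv.induct)
  case (eqv_refl w) show ?case by (rule eqv.eqv_refl)
next
  case (eqv_sym w w') show ?case by (rule eqv.eqv_sym[OF eqv_sym.IH])
next
  case (eqv_trans w1 w2 w3) show ?case by (rule eqv.eqv_trans[OF eqv_trans.IH])
next
  case (eqv_cancel a x b c) show ?case using eqv.eqv_cancel[of "y@a" x b c] by simp
next
  case (eqv_rel r a c) show ?case using eqv.eqv_rel[OF eqv_rel(1), of "y@a" c] by simp
qed

lemma eqv_app_r: "eqv x x' \<Longrightarrow> eqv (x @ y) (x' @ y)"
proof (induction rule: eqv.induct)
  case (eqv_refl w) show ?case by (rule eqv.eqv_refl)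
next
  case (eqv_sym w w') show ?case by (rule eqv.eqv_sym[OF eqv_sym.IH])
next
  case (eqv_trans w1 w2 w3) show ?case by (rule eqv.eqv_trans[OF eqv_trans.IH])
next
  case (eqv_cancel a x b c) show ?case using eqv.eqv_cancel[of a x b "c@y"] by simp
next
  case (eqv_rel r a c) show ?case using eqv.eqv_rel[OF eqv_rel(1), of a "c@y"] by simp
qed

lemma cls_alt: "cls x = {z. eqv x z}"
  unfolding cls_def E_rel_def by auto

lemma cls_eq: "eqv x y \<Longrightarrow> cls x = cls y"
proof -
  assume xy: "eqv x y"
  have "eqv x z \<longleftrightarrow> eqv y z" for z
  proof
    assume "eqv x z" then show "eqv y z" using eqv_trans[OF eqv_sym[OF xy]] by blast
  next
    assume "eqv y z" then show "eqv x z" using eqv_trans[OF xy] by blast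
  qed
  then have e: "eqv x = eqv y" by (rule ext)
  show ?thesis unfolding cls_alt e ..
qed

lemma in_cls: "x \<in> cls x"
  unfolding cls_alt by (simp add: eqv_refl)

lemma mem_cls: "y \<in> cls x \<Longrightarrow> eqv x y"
  unfolding cls_alt by simp

lemma carrier_cls: "X \<in> carrier E \<Longrightarrow> X = cls (SOME x. x \<in> X)"
proof -
  assume "X \<in> carrier E"
  then have "X \<in> UNIV // E_rel" unfolding E_def by simp
  then obtain w where "X = E_rel `` {w}" by (rule quotientE)
  then have X: "X = cls w" unfolding cls_def .
  have "\<exists>x. x \<in> X" using in_cls X by blast
  hence "(SOME x. x \<in> X) \<in> X" by (rule someI_ex)
  hence "eqv w (SOME x. x \<in> X)" using X mem_cls by simp
  then show ?thesis using X cls_eq[of w "SOME x. x \<in> X"] by simp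
qed

lemma cls_carrier: "cls x \<in> carrier E"
proof -
  have "E_rel `` {x} \<in> UNIV // E_rel" by (rule quotientI) simp
  then show ?thesis unfolding E_def cls_def by simp
qed

lemma some_cls: "eqv x (SOME y. y \<in> cls x)"
proof -
  have "\<exists>y. y \<in> cls x" using in_cls by blast
  hence "(SOME y. y \<in> cls x) \<in> cls x" by (rule someI_ex)
  thus ?thesis by (rule mem_cls)
qed

lemma mult_cls: "cls x \<otimes>\<^bsub>E\<^esub> cls y = cls (x @ y)"
proof -
  have 1: "eqv (x @ y) ((SOME a. a \<in> cls x) @ y)" by (rule eqv_app_r[OF some_cls])
  have 2: "eqv ((SOME a. a \<in> cls x) @ y) ((SOME a. a \<in> cls x) @ (SOME b. b \<in> cls y))"
    by (rule eqv_app_l[OF some_cls])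
  have e: "eqv (x @ y) ((SOME a. a \<in> cls x) @ (SOME b. b \<in> cls y))"
    by (rule eqv_trans[OF 1 2])
  have "cls ((SOME a. a \<in> cls x) @ (SOME b. b \<in> cls y)) = cls (x @ y)"
    using cls_eq[OF eqv_sym[OF e]] .
  then show ?thesis unfolding E_def by simp
qed

fun p :: "gen \<Rightarrow> word \<Rightarrow> 2" where
  "p g [] = 0"
| "p g (l # w) = (if fst l = g then 1 else 0) + p g w"

lemma p_app: "p g (x @ y) = p g x + p g y"
  by (induction x) (auto simp: algebra_simps)

lemma hom_cls:
  assumes h: "is_hom_F2 \<phi>"
  shows "\<phi> (cls w) = \<phi> (cls [(Gt,False)]) * p Gt w + \<phi> (cls [(Gu,False)]) * p Gu w
     + \<phi> (cls [(Gv,False)]) * p Gv w"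
proof -
  have one: "\<phi> (cls []) = 0"
  proof -
    have "\<phi> (cls [] \<otimes>\<^bsub>E\<^esub> cls []) = \<phi> (cls []) + \<phi> (cls [])"
      using h[unfolded is_hom_F2_def] cls_carrier by blast
    hence "\<phi> (cls []) = \<phi> (cls []) + \<phi> (cls [])" by (simp only: mult_cls append_Nil)
    thus ?thesis by (metis add_cancel_right_right)
  qed
  have inv: "\<phi> (cls [(g, True)]) = \<phi> (cls [(g, False)])" for g
  proof -
    have "eqv ([] @ [(g,False),(g, \<not> False)] @ []) ([] @ [])" by (rule eqv_cancel)
    hence "cls [(g,False),(g,True)] = cls []" using cls_eq[of "[(g,False),(g,True)]" "[]"] by simp
    hence "cls [(g,False)] \<otimes>\<^bsub>E\<^esub> cls [(g,True)] = cls []" by (simp add: mult_cls)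
    hence "\<phi> (cls [(g,False)]) + \<phi> (cls [(g,True)]) = 0"
      using h[unfolded is_hom_F2_def, rule_format, OF cls_carrier cls_carrier] one by metis
    then show ?thesis by (metis add_eq_0_iff neg2)
  qed
  have letter: "\<phi> (cls [l]) = \<phi> (cls [(Gt,False)]) * p Gt [l] + \<phi> (cls [(Gu,False)]) * p Gu [l]
     + \<phi> (cls [(Gv,False)]) * p Gv [l]" for l
    by (cases l; rename_tac g b; case_tac g; case_tac b) (simp_all add: inv)
  show ?thesis
  proof (induction w)
    case Nil then show ?case using one by simp
  next
    case (Cons l w)
    have "cls (l # w) = cls [l] \<otimes>\<^bsub>E\<^esub> cls w" by (simp add: mult_cls)
    hence "\<phi> (cls (l # w)) = \<phi> (cls [l]) + \<phi> (cls w)"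
      using h[unfolded is_hom_F2_def, rule_format, OF cls_carrier cls_carrier] by metis
    then show ?case using Cons.IH letter[of l] by (simp add: algebra_simps)
  qed
qed

definition c :: "word \<Rightarrow> word \<Rightarrow> 2" where
  "c x y = p Gt x * p Gu y + p Gu x * p Gu y + p Gv x * p Gv y"

fun Fl :: "letter \<Rightarrow> 2" where
  "Fl (Gt, b) = 0"
| "Fl (Gu, b) = (if b then 0 else 1)"
| "Fl (Gv, b) = (if b then 0 else 1)"

fun F :: "word \<Rightarrow> 2" where
  "F [] = 0"
| "F (l # w) = Fl l + F w + c [l] w"

lemma c_app_l: "c (x @ y) z = c x z + c y z"
  unfolding c_def p_app by (simp add: algebra_simps)
lemma c_app_r: "c z (x @ y) = c z x + c z y"
  unfolding c_def p_app by (simp add: algebra_simps)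

lemma F_app: "F (x @ y) = F x + F y + c x y"
proof (induction x)
  case Nil then show ?case by (simp add: c_def)
next
  case (Cons l x)
  have "c [l] (x @ y) = c [l] x + c [l] y" by (rule c_app_r)
  moreover have "c (l # x) y = c [l] y + c x y" using c_app_l[of "[l]" x y] by simp
  ultimately show ?case using Cons by (simp add: algebra_simps)
qed

lemma c_zero_r: "(\<And>g. p g r = 0) \<Longrightarrow> c a r = 0"
  by (simp add: c_def)
lemma c_zero_l: "(\<And>g. p g r = 0) \<Longrightarrow> c r a = 0"
  by (simp add: c_def)

lemma F_ins: "F r = 0 \<Longrightarrow> (\<And>g. p g r = 0) \<Longrightarrow> F (a @ r @ b) = F (a @ b)"
  by (simp add: F_app c_app_l c_app_r c_zero_r c_zero_l)

lemma one_one: "(1::2) + 1 = 0" by (rule two_add_self)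

lemma F_eqv: "eqv x y \<Longrightarrow> F x = F y"
proof (induction rule: eqv.induct)
  case (eqv_cancel a x b c')
  show ?case
  proof (rule F_ins)
    show "F [(x, b), (x, \<not> b)] = 0"
      by (cases x; cases b) (simp_all add: c_def one_one)
    show "p g [(x, b), (x, \<not> b)] = 0" for g by (simp add: one_one)
  qed
next
  case (eqv_rel r a c')
  show ?case
  proof (rule F_ins)
    show "F r = 0" using eqv_rel by (auto simp: relators_def c_def one_one)
    show "p g r = 0" for g using eqv_rel by (cases g) (auto simp: relators_def one_one)
  qed
qed auto

theorem lemma6:
  fixes T U V :: "word set \<Rightarrow> 2"
  assumes "is_hom_F2 T" and "is_hom_F2 U" and "is_hom_F2 V"
    and "T (cls [(Gt,False)]) = 1" and "T (cls [(Gu,False)]) = 0" and "T (cls [(Gv,False)]) = 0"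
    and "U (cls [(Gt,False)]) = 0" and "U (cls [(Gu,False)]) = 1" and "U (cls [(Gv,False)]) = 0"
    and "V (cls [(Gt,False)]) = 0" and "V (cls [(Gu,False)]) = 0" and "V (cls [(Gv,False)]) = 1"
  shows "\<exists>f :: word set \<Rightarrow> 2. \<forall>g\<in>carrier E. \<forall>h\<in>carrier E.
           cup1 T U g h + cup1 U U g h + cup1 V V g h = cobound1 f g h"
proof (intro exI ballI)
  fix g h assume g: "g \<in> carrier E" and h: "h \<in> carrier E"
  define x where "x = (SOME x. x \<in> g)"
  define y where "y = (SOME x. x \<in> h)"
  have gx: "g = cls x" using carrier_cls[OF g] x_def by simp
  have hy: "h = cls y" using carrier_cls[OF h] y_def by simp
  have Fc: "F (SOME z. z \<in> cls w) = F w" for w using F_eqv[OF some_cls[of w]] by simp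
  have T: "T (cls w) = p Gt w" for w using hom_cls[OF assms(1), of w] assms by simp
  have U: "U (cls w) = p Gu w" for w using hom_cls[OF assms(2), of w] assms by simp
  have V: "V (cls w) = p Gv w" for w using hom_cls[OF assms(3), of w] assms by simp
  show "cup1 T U g h + cup1 U U g h + cup1 V V g h
     = cobound1 (\<lambda>X. F (SOME z. z \<in> X)) g h"
    unfolding gx hy cup1_def cobound1_def mult_cls Fc T U V F_app c_def
    by (rule key2)
qed

end
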